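(* Let $K\subset\mathbb{R}^2$ be a centrally symmetric convex body of area $1$. Then for every $r$ with $0<r\le 1/2$, $K$ has an inscribed rectangle of area $r$.
   Context: A convex body is a compact convex set with nonempty interior. A polygon is inscribed in $K$ if all its vertices lie on the boundary $\partial K$. *)

theory Defs
  imports "HOL-Analysis.Analysis"
begin

definition convex_body :: "(real^2) set \<Rightarrow> bool" where
  "convex_body K \<longleftrightarrow> compact K \<and> convex K \<and> interior K \<noteq> {}"

definition centrally_symmetric :: "(real^2) set \<Rightarrow> bool" where
  "centrally_symmetric K \<longleftrightarrow> (\<exists>c. \<forall>x\<in>K. 2 *\<^sub>R c - x \<in> K)"

definition is_rectangle :: "real^2 \<Rightarrow> real^2 \<Rightarrow> real^2 \<Rightarrow> real^2 \<Rightarrow> bool" where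
  "is_rectangle a b c d \<longleftrightarrow> (b - a) \<bullet> (d - a) = 0 \<and> c = b + d - a"

definition rect_area :: "real^2 \<Rightarrow> real^2 \<Rightarrow> real^2 \<Rightarrow> real" where
  "rect_area a b d = norm (b - a) * norm (d - a)"

definition has_inscribed_rectangle_of_area :: "(real^2) set \<Rightarrow> real \<Rightarrow> bool" where
  "has_inscribed_rectangle_of_area K r \<longleftrightarrow>
     (\<exists>a b c d. is_rectangle a b c d \<and> rect_area a b d = r \<and>
        a \<in> frontier K \<and> b \<in> frontier K \<and> c \<in> frontier K \<and> d \<in> frontier K)"

end

theory Submission
  imports Defs
begin


definition ep :: "'a::euclidean_space set \<Rightarrow> 'a \<Rightarrow> 'a \<Rightarrow> real" where
  "ep K p v = Sup {l. p + l *\<^sub>R v \<in> K}"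

lemma ep_bdd:
  fixes K :: "'a::euclidean_space set"
  assumes "bounded K" "v \<noteq> 0"
  shows "bdd_above {l. p + l *\<^sub>R v \<in> K}"
proof -
  obtain B where B: "\<And>x. x \<in> K \<Longrightarrow> norm x \<le> B" using assms(1) bounded_iff by blast
  show ?thesis
  proof (rule bdd_aboveI)
    fix l assume "l \<in> {l. p + l *\<^sub>R v \<in> K}"
    then have "norm (p + l *\<^sub>R v) \<le> B" using B by auto
    moreover have "\<bar>l\<bar> * norm v \<le> norm (p + l *\<^sub>R v) + norm p"
    proof -
      have "\<bar>l\<bar> * norm v = norm ((p + l *\<^sub>R v) - p)" by simp
      also have "\<dots> \<le> norm (p + l *\<^sub>R v) + norm p" by (rule norm_triangle_ineq4)
      finally show ?thesis .
    qed
    ultimately have "\<bar>l\<bar> * norm v \<le> B + norm p" by linarith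
    then have "\<bar>l\<bar> \<le> (B + norm p) / norm v" using assms(2) by (simp add: pos_le_divide_eq)
    then show "l \<le> (B + norm p) / norm v" by (meson abs_ge_self order_trans)
  qed
qed

lemma ep_frontier:
  fixes K :: "'a::euclidean_space set"
  assumes K: "convex K" "closed K" "bounded K" and v: "v \<noteq> 0"
    and lz: "p + lz *\<^sub>R v \<in> interior K"
  shows "p + ep K p v *\<^sub>R v \<in> frontier K" "lz \<le> ep K p v"
proof -
  let ?S = "{l. p + l *\<^sub>R v \<in> K}"
  have bdd: "bdd_above ?S" by (rule ep_bdd[OF K(3) v])
  have ne: "lz \<in> ?S" using lz interior_subset by blast
  have cl: "closed ?S"
  proof -
    have "closed ((\<lambda>l. p + l *\<^sub>R v) -` K)"
      by (rule closed_vimage[OF K(2)]) (auto intro!: continuous_intros)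
    then show ?thesis by (simp add: vimage_def)
  qed
  have inS: "ep K p v \<in> ?S" unfolding ep_def using closed_contains_Sup[OF _ bdd cl] ne by blast
  show "lz \<le> ep K p v" unfolding ep_def using cSup_upper[OF ne bdd] .
  have "p + ep K p v *\<^sub>R v \<notin> interior K"
  proof
    assume "p + ep K p v *\<^sub>R v \<in> interior K"
    then obtain d where d: "d > 0" "ball (p + ep K p v *\<^sub>R v) d \<subseteq> K"
      using mem_interior by blast
    let ?l = "ep K p v + d / (2 * norm v)"
    have "dist (p + ep K p v *\<^sub>R v) (p + ?l *\<^sub>R v) = d/2"
      using v d by (simp add: dist_norm algebra_simps)
    then have "?l \<in> ?S" using d by auto
    then have "?l \<le> ep K p v" unfolding ep_def using cSup_upper[OF _ bdd] by blast
    then show False using d v by (simp add: field_simps)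
  qed
  then show "p + ep K p v *\<^sub>R v \<in> frontier K"
    using inS K(2) by (simp add: frontier_def)
qed

lemma ep_cont:
  fixes K :: "'a::euclidean_space set" and P V :: "real \<Rightarrow> 'a"
  assumes K: "convex K" "closed K" "bounded K"
    and P: "isCont P t0" and V: "isCont V t0" and v: "V t0 \<noteq> 0"
    and lz: "P t0 + lz *\<^sub>R V t0 \<in> interior K"
  shows "isCont (\<lambda>t. ep K (P t) (V t)) t0"
proof -
  define g0 where "g0 = ep K (P t0) (V t0)"
  let ?S0 = "{l. P t0 + l *\<^sub>R V t0 \<in> K}"
  have bdd0: "bdd_above ?S0" by (rule ep_bdd[OF K(3) v])
  have l0S: "lz \<in> ?S0" using lz interior_subset by blast
  have l0g: "lz \<le> g0" unfolding g0_def ep_def using cSup_upper[OF l0S bdd0] .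
  show ?thesis unfolding isCont_def g0_def[symmetric]
  proof (rule tendstoI)
    fix e :: real assume e: "e > 0"
    define mu where "mu = g0 + e/2"
    have notK: "P t0 + mu *\<^sub>R V t0 \<notin> K"
    proof
      assume "P t0 + mu *\<^sub>R V t0 \<in> K"
      then have "mu \<le> g0" unfolding g0_def ep_def using cSup_upper[OF _ bdd0] by blast
      then show False using e mu_def by simp
    qed
    have cont_mu: "isCont (\<lambda>t. P t + mu *\<^sub>R V t) t0" by (intro continuous_intros P V)
    have ev1: "eventually (\<lambda>t. P t + mu *\<^sub>R V t \<in> - K) (at t0)"
      using topological_tendstoD[OF cont_mu[unfolded isCont_def] open_Compl[OF K(2)]] notK by simp
    obtain l1 where l1: "l1 \<ge> g0 - e/2" "l1 < mu" "P t0 + l1 *\<^sub>R V t0 \<in> interior K"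
    proof (cases "lz \<ge> g0 - e/2")
      case True
      then show ?thesis using that[of lz] lz l0g e mu_def by simp
    next
      case False
      have "g0 - e/2 < Sup ?S0" using e unfolding g0_def ep_def by simp
      then obtain l' where l': "l' \<in> ?S0" "l' > g0 - e/2"
        using less_cSup_iff[of ?S0, OF _ bdd0] l0S by blast
      define u where "u = (l' - (g0 - e/2)) / (l' - lz)"
      have u: "0 < u" "u \<le> 1" using False l' by (auto simp: u_def field_simps)
      have "(P t0 + l' *\<^sub>R V t0) - u *\<^sub>R ((P t0 + l' *\<^sub>R V t0) - (P t0 + lz *\<^sub>R V t0)) \<in> interior K"
        using mem_interior_closure_convex_shrink[OF K(1) lz _ u] l' closure_subset by blast
      moreover have "(P t0 + l' *\<^sub>R V t0) - u *\<^sub>R ((P t0 + l' *\<^sub>R V t0) - (P t0 + lz *\<^sub>R V t0))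
          = P t0 + (l' - u * (l' - lz)) *\<^sub>R V t0" by (simp add: algebra_simps)
      moreover have "l' - u * (l' - lz) = g0 - e/2" using False l' by (simp add: u_def field_simps)
      ultimately have "P t0 + (g0 - e/2) *\<^sub>R V t0 \<in> interior K" by metis
      then show ?thesis using that[of "g0 - e/2"] e mu_def by simp
    qed
    have cont_l1: "isCont (\<lambda>t. P t + l1 *\<^sub>R V t) t0" by (intro continuous_intros P V)
    have ev2: "eventually (\<lambda>t. P t + l1 *\<^sub>R V t \<in> interior K) (at t0)"
      using topological_tendstoD[OF cont_l1[unfolded isCont_def] open_interior] l1 by simp
    show "eventually (\<lambda>t. dist (ep K (P t) (V t)) g0 < e) (at t0)"
      using ev1 ev2
    proof eventually_elim
      case (elim t)
      let ?S = "{l. P t + l *\<^sub>R V t \<in> K}"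
      have l1S: "l1 \<in> ?S" using elim interior_subset by blast
      have ub: "l < mu" if "l \<in> ?S" for l
      proof (rule ccontr)
        assume "\<not> l < mu"
        then have lm: "l \<ge> mu" by simp
        define u where "u = (mu - l1) / (l - l1)"
        have u: "0 \<le> u" "u \<le> 1" using lm l1 by (auto simp: u_def field_simps)
        have "(1 - u) *\<^sub>R (P t + l1 *\<^sub>R V t) + u *\<^sub>R (P t + l *\<^sub>R V t) \<in> K"
          using convexD[OF K(1), of "P t + l1 *\<^sub>R V t" "P t + l *\<^sub>R V t" "1 - u" u] l1S that u by auto
        moreover have "(1 - u) *\<^sub>R (P t + l1 *\<^sub>R V t) + u *\<^sub>R (P t + l *\<^sub>R V t)
            = P t + ((1 - u) * l1 + u * l) *\<^sub>R V t" by (simp add: algebra_simps)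
        moreover have "(1 - u) * l1 + u * l = mu"
        proof -
          have "u * (l - l1) = mu - l1" using lm l1 by (simp add: u_def)
          then show ?thesis by (simp add: algebra_simps)
        qed
        ultimately show False using elim by simp
      qed
      have bdd: "bdd_above ?S" by (rule bdd_aboveI[of _ mu]) (use ub in force)
      have "l1 \<le> ep K (P t) (V t)" unfolding ep_def using cSup_upper[OF l1S bdd] .
      moreover have "ep K (P t) (V t) \<le> mu" unfolding ep_def
        by (rule cSup_least) (use l1S ub in force)+
      ultimately show ?case using l1 e mu_def by (simp add: dist_real_def abs_if)
    qed
  qed
qed




definition ee :: "real \<Rightarrow> real^2" where "ee t = vector [cos t, sin t]"
definition nn :: "real \<Rightarrow> real^2" where "nn t = vector [- sin t, cos t]"

lemma inner2: "(x::real^2) \<bullet> y = x$1 * y$1 + x$2 * y$2"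
  by (simp add: inner_vec_def sum_2)

lemma ee_comp [simp]: "ee t $ 1 = cos t" "ee t $ 2 = sin t"
  by (simp_all add: ee_def)
lemma nn_comp [simp]: "nn t $ 1 = - sin t" "nn t $ 2 = cos t"
  by (simp_all add: nn_def)

lemma ee_inner [simp]: "ee t \<bullet> ee t = 1" "nn t \<bullet> nn t = 1" "ee t \<bullet> nn t = 0" "nn t \<bullet> ee t = 0"
  by (simp_all add: inner2 power2_eq_square[symmetric])

lemma norm_ee [simp]: "norm (ee t) = 1" "norm (nn t) = 1"
  by (simp_all add: norm_eq_sqrt_inner)

lemma ee_nz [simp]: "ee t \<noteq> 0"
  using norm_ee(1)[of t] by (metis norm_zero zero_neq_one)

lemma cs_aux: "cos (t::real) * (cos t * c) + sin t * (sin t * c) = c" "sin t * (sin t * c) + cos t * (cos t * c) = c"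
proof -
  have "cos t * (cos t * c) + sin t * (sin t * c) = (cos t * cos t + sin t * sin t) * c"
    by (simp only: distrib_right mult.assoc)
  also have "\<dots> = c" by (simp only: sin_cos_squared_add3 mult_1)
  finally show "cos t * (cos t * c) + sin t * (sin t * c) = c" .
  then show "sin t * (sin t * c) + cos t * (cos t * c) = c" by (simp only: add.commute)
qed

lemma decomp2: "(z::real^2) = (z \<bullet> ee t) *\<^sub>R ee t + (z \<bullet> nn t) *\<^sub>R nn t"
  by (simp add: vec_eq_iff forall_2 inner2 algebra_simps cs_aux)

lemma ee_alt: "ee t = cos t *\<^sub>R vector [1,0] + sin t *\<^sub>R vector [0,1]"
  by (simp add: vec_eq_iff forall_2)
lemma nn_alt: "nn t = (- sin t) *\<^sub>R vector [1,0] + cos t *\<^sub>R vector [0,1]"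
  by (simp add: vec_eq_iff forall_2)

lemma isCont_ee [continuous_intros]: "isCont ee t" 
  unfolding ee_alt[abs_def] by (intro continuous_intros)
lemma isCont_nn [continuous_intros]: "isCont nn t" 
  unfolding nn_alt[abs_def] by (intro continuous_intros)

lemma polar2: 
  fixes y :: "real^2" assumes "y \<noteq> 0"
  obtains t where "y = norm y *\<^sub>R ee t"
proof -
  have n: "norm y > 0" using assms by simp
  have "(y$1 / norm y)\<^sup>2 + (y$2 / norm y)\<^sup>2 = 1"
  proof -
    have "(norm y)\<^sup>2 = y$1 * y$1 + y$2 * y$2" by (simp add: power2_norm_eq_inner inner2)
    moreover have "norm y * norm y \<noteq> 0" using n by simp
    ultimately show ?thesis by (simp add: power_divide power2_eq_square add_divide_distrib[symmetric])
  qed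
  then obtain t where t: "0 \<le> t" "t < 2*pi" "y$1 / norm y = cos t" "y$2 / norm y = sin t"
    by (rule sincos_total_2pi)
  have c1: "y$1 = norm y * cos t" using t(3) n by (simp add: divide_eq_eq mult.commute)
  have c2: "y$2 = norm y * sin t" using t(4) n by (simp add: divide_eq_eq mult.commute)
  have "y = norm y *\<^sub>R ee t" by (simp add: vec_eq_iff forall_2 c1[symmetric] c2[symmetric])
  then show ?thesis using that by blast
qed

lemma box2_measure:
  assumes "h \<ge> 0" "A \<ge> 0"
  shows "measure lebesgue (cbox (vector [-h, -A]) (vector [h, A]) :: (real^2) set) = (2*h)*(2*A)"
proof -
  have ne: "cbox (vector [-h, -A]) (vector [h, A]) \<noteq> ({} :: (real^2) set)"
    using assms by (auto simp: interval_ne_empty_cart forall_2)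
  have "measure lebesgue (cbox (vector [-h, -A]) (vector [h, A]) :: (real^2) set)
      = measure lborel (cbox (vector [-h, -A]) (vector [h, A]) :: (real^2) set)"
    by (simp add: measure_completion)
  also have "\<dots> = (2*h)*(2*A)" using content_cbox_cart[OF ne]
    by (simp add: UNIV_2 prod_2[symmetric])
  finally show ?thesis .
qed




locale cbody =
  fixes K :: "(real^2) set"
  assumes cvx: "convex K" and cpt: "compact K" and int0: "0 \<in> interior K"
    and sym: "\<And>x. x \<in> K \<Longrightarrow> -x \<in> K"
begin

lemma clK: "closed K" using cpt compact_imp_closed by blast
lemma bdK: "bounded K" using cpt compact_imp_bounded by blast
lemma frK: "frontier K \<subseteq> K" using clK frontier_subset_closed by blast

definition rho where "rho t = ep K 0 (ee t)"

lemma rho_front: "rho t *\<^sub>R ee t \<in> frontier K" and rho_nn: "0 \<le> rho t"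
  using ep_frontier[OF cvx clK bdK ee_nz, of 0 0] int0 unfolding rho_def by simp_all

lemma rho_pos: "rho t > 0"
proof -
  have "rho t *\<^sub>R ee t \<noteq> 0" using rho_front[of t] int0 by (auto simp: frontier_def)
  then show ?thesis using rho_nn[of t] by force
qed

lemma rho_cont: "isCont rho t"
  unfolding rho_def[abs_def]
  using ep_cont[OF cvx clK bdK _ isCont_ee ee_nz, where P="\<lambda>t. 0" and lz=0] int0 by simp

lemma rho_upper: "s *\<^sub>R ee t \<in> K \<Longrightarrow> s \<le> rho t"
proof -
  assume "s *\<^sub>R ee t \<in> K"
  moreover have "bdd_above {l. 0 + l *\<^sub>R ee t \<in> K}" by (rule ep_bdd[OF bdK ee_nz])
  ultimately show ?thesis unfolding rho_def ep_def by (simp add: cSup_upper)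
qed

lemma in_K_norm: "x \<in> K \<Longrightarrow> x \<noteq> 0 \<Longrightarrow> \<exists>t. x = norm x *\<^sub>R ee t \<and> norm x \<le> rho t"
  by (metis polar2 rho_upper)

lemma rho_ray:
  assumes y: "y \<in> frontier K" "y = s *\<^sub>R ee t" "s > 0"
  shows "rho t = s"
proof -
  have "s \<le> rho t" using rho_upper y frK by blast
  moreover have "\<not> s < rho t"
  proof
    assume "s < rho t"
    define u where "u = 1 - s / rho t"
    have u: "0 < u" "u \<le> 1" using \<open>s < rho t\<close> y(3) rho_pos[of t] by (auto simp: u_def field_simps)
    have "rho t *\<^sub>R ee t - u *\<^sub>R (rho t *\<^sub>R ee t - 0) \<in> interior K"
      using mem_interior_closure_convex_shrink[OF cvx int0 _ u] rho_front[of t] frK closure_subset by blast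
    moreover have "rho t *\<^sub>R ee t - u *\<^sub>R (rho t *\<^sub>R ee t - 0) = y"
      using rho_pos[of t] y(2) by (simp add: u_def algebra_simps)
    ultimately show False using y(1) by (auto simp: frontier_def)
  qed
  ultimately show ?thesis by simp
qed

lemma front_sym: "y \<in> frontier K \<Longrightarrow> -y \<in> frontier K"
proof -
  assume y: "y \<in> frontier K"
  have "-y \<in> K" using y frK sym by blast
  moreover have "-y \<notin> interior K"
  proof
    assume "-y \<in> interior K"
    then obtain d where d: "d > 0" "ball (-y) d \<subseteq> K" using mem_interior by blast
    have "ball y d \<subseteq> K"
    proof
      fix z assume "z \<in> ball y d"
      then have "-z \<in> ball (-y) d" by (simp add: dist_norm norm_minus_commute)
      then show "z \<in> K" using d sym by fastforce
    qed
    then have "y \<in> interior K" using d mem_interior by blast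
    then show False using y by (auto simp: frontier_def)
  qed
  ultimately show "-y \<in> frontier K" using clK by (simp add: frontier_def)
qed

lemma area_bound:
  assumes h: "\<And>x. x \<in> K \<Longrightarrow> x \<bullet> nn t \<le> h"
  shows "measure lebesgue K \<le> 4 * rho t * h"
proof -
  define u where "u = rho t *\<^sub>R ee t"
  have uF: "u \<in> frontier K" using rho_front u_def by simp
  have ri: "rel_interior K = interior K" using int0 rel_interior_nonempty_interior by blast
  obtain a where a: "a \<noteq> 0" "\<And>y. y \<in> closure K \<Longrightarrow> a \<bullet> u \<le> a \<bullet> y"
  proof (rule supporting_hyperplane_relative_frontier[OF cvx, of u])
    show "u \<in> closure K" using uF frK closure_subset by blast
    show "u \<notin> rel_interior K" using uF ri by (simp add: frontier_def)
  qed (blast intro: that)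
  define m where "m = - a"
  have mK: "y \<bullet> m \<le> u \<bullet> m" if "y \<in> K" for y
    using a(2)[of y] that closure_subset by (auto simp: m_def inner_commute)
  define A where "A = u \<bullet> m"
  have Apos: "A > 0"
  proof -
    obtain d where d: "d > 0" "ball 0 d \<subseteq> K" using int0 mem_interior by blast
    have mn: "norm m > 0" using a(1) m_def by simp
    define y where "y = (d / (2 * norm m)) *\<^sub>R m"
    have "norm y = d/2" using mn d by (simp add: y_def)
    then have "y \<in> K" using d by auto
    moreover have "y \<bullet> m = d/2 * norm m" using mn
      by (simp add: y_def power2_norm_eq_inner[symmetric] power2_eq_square)
    ultimately show ?thesis using mK[of y] d mn A_def by (metis divide_pos_pos half_gt_zero_iff less_le_trans mult_pos_pos)
  qed
  have hge: "h \<ge> 0" using h[of 0] int0 interior_subset by fastforce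
  have lowh: "- h \<le> x \<bullet> nn t" if "x \<in> K" for x using h[OF sym[OF that]] by simp
  have lowA: "- A \<le> x \<bullet> m" if "x \<in> K" for x using mK[OF sym[OF that]] A_def by simp
  define mu where "mu = ee t \<bullet> m"
  define nu where "nu = nn t \<bullet> m"
  have Amu: "A = rho t * mu" by (simp add: A_def u_def mu_def)
  have mupos: "mu > 0" using Amu Apos rho_pos[of t] by (metis zero_less_mult_pos)
  define w where "w = nn t - (nu / mu) *\<^sub>R ee t"
  define S where "S p = (p$2 / mu) *\<^sub>R ee t + (p$1) *\<^sub>R w" for p :: "real^2"
  have linS: "linear S"
    by (rule linearI) (simp_all add: S_def add_divide_distrib scaleR_add_left scaleR_add_right)
  define B where "B = (cbox (vector [-h, -A]) (vector [h, A]) :: (real^2) set)"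
  have sub: "K \<subseteq> S ` B"
  proof
    fix x assume x: "x \<in> K"
    define p where "p = (vector [x \<bullet> nn t, x \<bullet> m] :: real^2)"
    have pB: "p \<in> B" using h[OF x] lowh[OF x] mK[OF x] lowA[OF x]
      by (simp add: B_def p_def mem_box_cart forall_2 A_def)
    have xm: "x \<bullet> m = (x \<bullet> ee t) * mu + (x \<bullet> nn t) * nu"
    proof -
      have "x \<bullet> m = ((x \<bullet> ee t) *\<^sub>R ee t + (x \<bullet> nn t) *\<^sub>R nn t) \<bullet> m"
        using decomp2[of x t] by simp
      then show ?thesis by (simp add: inner_add_left mu_def nu_def)
    qed
    have "S p = ((x \<bullet> m) / mu - (x \<bullet> nn t) * (nu / mu)) *\<^sub>R ee t + (x \<bullet> nn t) *\<^sub>R nn t"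
      by (simp add: S_def p_def w_def algebra_simps)
    also have "(x \<bullet> m) / mu - (x \<bullet> nn t) * (nu / mu) = x \<bullet> ee t"
      using mupos xm by (simp add: field_simps)
    finally have "S p = x" using decomp2[of x t] by simp
    then show "x \<in> S ` B" using pB by blast
  qed
  have Bm: "B \<in> lmeasurable" by (simp add: B_def)
  have "measure lebesgue K \<le> measure lebesgue (S ` B)"
    by (rule measure_mono_fmeasurable[OF sub])
       (auto intro: fmeasurableD lmeasurable_compact cpt measurable_linear_image[OF linS Bm])
  also have "\<dots> = \<bar>det (matrix S)\<bar> * measure lebesgue B"
    by (rule measure_linear_image[OF linS Bm])
  also have "det (matrix S) = - 1 / mu"
  proof -
    have "det (matrix S) = (w$1 * sin t - cos t * w$2) / mu"
      by (simp add: det_2 matrix_def S_def axis_def diff_divide_distrib)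
    also have "w$1 * sin t - cos t * w$2 = - 1"
      by (simp add: w_def algebra_simps)
    finally show ?thesis by simp
  qed
  also have "measure lebesgue B = (2*h)*(2*A)" unfolding B_def
    by (rule box2_measure[OF hge]) (use Apos in simp)
  finally show ?thesis using mupos Amu by (simp add: field_simps)
qed

end



lemma area2:
  fixes a b :: "real^2"
  assumes "norm a = norm b"
  shows "norm (b - a) * norm (- b - a) = 2 * \<bar>a$1 * b$2 - a$2 * b$1\<bar>"
proof -
  define N where "N = a$1 * a$1 + a$2 * a$2"
  define d where "d = a$1 * b$1 + a$2 * b$2"
  define D where "D = a$1 * b$2 - a$2 * b$1"
  have na: "(norm a)\<^sup>2 = N" by (simp add: power2_norm_eq_inner inner2 N_def)
  have nb: "(norm b)\<^sup>2 = b$1 * b$1 + b$2 * b$2" by (simp add: power2_norm_eq_inner inner2)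
  have E: "b$1 * b$1 + b$2 * b$2 = N" using na nb assms by metis
  have X0: "(norm (b - a))\<^sup>2 = (b$1 * b$1 + b$2 * b$2) + N - 2*d"
    by (simp add: power2_norm_eq_inner inner2 algebra_simps d_def N_def)
  have X: "(norm (b - a))\<^sup>2 = 2*N - 2*d" using X0 E by simp
  have Y0: "(norm (- b - a))\<^sup>2 = (b$1 * b$1 + b$2 * b$2) + N + 2*d"
    by (simp add: power2_norm_eq_inner inner2 algebra_simps d_def N_def)
  have Y: "(norm (- b - a))\<^sup>2 = 2*N + 2*d" using Y0 E by simp
  have Lag: "N * N = d * d + D * D"
  proof -
    have "N * N = N * (b$1 * b$1 + b$2 * b$2)" using E by simp
    also have "\<dots> = d * d + D * D" by (simp add: N_def d_def D_def algebra_simps)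
    finally show ?thesis .
  qed
  have "(norm (b - a) * norm (- b - a))\<^sup>2 = (2*N - 2*d) * (2*N + 2*d)"
    by (simp add: power_mult_distrib X Y)
  also have "\<dots> = (2 * \<bar>D\<bar>)\<^sup>2" using Lag by (simp add: algebra_simps power2_eq_square)
  finally have "(norm (b - a) * norm (- b - a))\<^sup>2 = (2 * \<bar>D\<bar>)\<^sup>2" .
  then have "norm (b - a) * norm (- b - a) = 2 * \<bar>D\<bar>"
    by (rule power2_eq_iff_nonneg[THEN iffD1, rotated 2]) simp_all
  then show ?thesis unfolding D_def .
qed

context cbody begin

lemma main_lt:
  assumes meas: "measure lebesgue K = 1" and r: "0 < r" "r < 1/2"
  shows "\<exists>a b. a \<in> frontier K \<and> b \<in> frontier K \<and> norm a = norm b \<and> norm (b - a) * norm (- b - a) = r"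
proof -
  define cc where "cc t = r / (2 * rho t)" for t
  have ccpos: "cc t > 0" for t using r rho_pos[of t] by (simp add: cc_def)
  have line_int: "\<exists>lz. cc t *\<^sub>R nn t + lz *\<^sub>R ee t \<in> interior K" for t
  proof -
    have "\<exists>x\<in>K. x \<bullet> nn t > cc t"
    proof (rule ccontr)
      assume "\<not> ?thesis"
      then have "measure lebesgue K \<le> 4 * rho t * cc t" using area_bound[of t "cc t"] by force
      also have "4 * rho t * cc t = 2 * r" using rho_pos[of t] by (simp add: cc_def)
      finally show False using meas r by simp
    qed
    then obtain x where x: "x \<in> K" "x \<bullet> nn t > cc t" by blast
    define hx where "hx = x \<bullet> nn t"
    have hx: "hx > cc t" "hx > 0" using x ccpos[of t] hx_def by auto
    define e where "e = 1 - cc t / hx"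
    have e: "0 < e" "e \<le> 1" using hx ccpos[of t] by (auto simp: e_def field_simps)
    define y where "y = x - e *\<^sub>R (x - 0)"
    have yi: "y \<in> interior K" unfolding y_def
      using mem_interior_closure_convex_shrink[OF cvx int0 _ e] x closure_subset by blast
    have "y \<bullet> nn t = cc t" using hx by (simp add: y_def e_def hx_def[symmetric] algebra_simps inner_diff_left)
    then have "y = cc t *\<^sub>R nn t + (y \<bullet> ee t) *\<^sub>R ee t" using decomp2[of y t] by (simp add: add.commute)
    then show ?thesis using yi by metis
  qed
  define beta where "beta t = ep K (cc t *\<^sub>R nn t) (ee t)" for t
  define b where "b t = cc t *\<^sub>R nn t + beta t *\<^sub>R ee t" for t
  have bF: "b t \<in> frontier K" for t
    using line_int[of t] ep_frontier(1)[OF cvx clK bdK ee_nz] unfolding b_def beta_def by blast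
  have cc_cont: "isCont cc t" for t
    unfolding cc_def[abs_def] using rho_pos[of t] by (intro continuous_intros rho_cont) simp
  have beta_cont: "isCont beta t" for t
  proof -
    obtain lz where "cc t *\<^sub>R nn t + lz *\<^sub>R ee t \<in> interior K" using line_int by blast
    then show ?thesis unfolding beta_def[abs_def]
      by (intro ep_cont[OF cvx clK bdK _ isCont_ee ee_nz]) (intro continuous_intros cc_cont)
  qed
  define f where "f t = (norm (b t))\<^sup>2 - (rho t)\<^sup>2" for t
  have f_cont: "continuous_on S f" for S
    unfolding f_def[abs_def] b_def[abs_def]
    by (intro continuous_at_imp_continuous_on ballI continuous_intros cc_cont beta_cont rho_cont)
  obtain yM where yM: "yM \<in> K" "\<And>y. y \<in> K \<Longrightarrow> norm y \<le> norm yM"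
    using continuous_attains_sup[OF cpt, of norm] int0 interior_subset
    by (metis continuous_on_norm_id empty_iff subsetD)
  have yMnz: "yM \<noteq> 0"
  proof
    assume "yM = 0"
    have "rho 0 *\<^sub>R ee 0 \<in> K" using rho_front frK by blast
    then have "norm (rho 0 *\<^sub>R ee 0) \<le> 0" using yM \<open>yM = 0\<close> by force
    then show False using rho_pos[of 0] by simp
  qed
  obtain tM where tM: "yM = norm yM *\<^sub>R ee tM" using polar2[OF yMnz] by blast
  have rhoM: "rho tM = norm yM"
  proof -
    have "norm yM \<le> rho tM" using rho_upper yM(1) tM by metis
    moreover have "norm (rho tM *\<^sub>R ee tM) \<le> norm yM" using yM(2) rho_front frK by blast
    ultimately show ?thesis using rho_pos[of tM] by simp
  qed
  have fM: "f tM \<le> 0"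
  proof -
    have "norm (b tM) \<le> rho tM" using yM(2)[of "b tM"] bF frK rhoM by auto
    then show ?thesis unfolding f_def using rho_pos[of tM]
      by (simp add: power_mono)
  qed
  have cF: "compact (frontier K)" using cpt compact_frontier by blast
  obtain ym where ym: "ym \<in> frontier K" "\<And>y. y \<in> frontier K \<Longrightarrow> norm ym \<le> norm y"
    using continuous_attains_inf[OF cF, of norm] rho_front
    by (metis continuous_on_norm_id empty_iff)
  have ymnz: "ym \<noteq> 0" using ym(1) int0 by (auto simp: frontier_def)
  obtain tm where tm: "ym = norm ym *\<^sub>R ee tm" using polar2[OF ymnz] by blast
  have rhom: "rho tm = norm ym" using rho_ray[OF ym(1) tm] ymnz by simp
  have fm: "f tm \<ge> 0"
  proof -
    have "rho tm \<le> norm (b tm)" using ym(2)[OF bF] rhom by simp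
    then show ?thesis unfolding f_def using rho_pos[of tm]
      by (simp add: power_mono)
  qed
  obtain t where ft: "f t = 0"
  proof (cases "tM \<le> tm")
    case True
    then show ?thesis using IVT'[of f tM 0 tm] fM fm f_cont that by blast
  next
    case False
    then show ?thesis using IVT2'[of f tM 0 tm] fM fm f_cont that by force
  qed
  define a where "a = rho t *\<^sub>R ee t"
  have aF: "a \<in> frontier K" using rho_front a_def by simp
  have nab: "norm a = norm (b t)"
  proof -
    have "(norm (b t))\<^sup>2 = (rho t)\<^sup>2" using ft f_def by simp
    then have "norm (b t) = rho t" using rho_pos[of t] by (simp add: power2_eq_iff_nonneg)
    then show ?thesis using rho_pos[of t] a_def by simp
  qed
  have bn: "b t \<bullet> nn t = cc t" by (simp add: b_def inner_add_left)
  have "a$1 * (b t)$2 - a$2 * (b t)$1 = rho t * (b t \<bullet> nn t)"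
    by (simp add: a_def inner2 algebra_simps)
  also have "\<dots> = r / 2" using bn rho_pos[of t] by (simp add: cc_def)
  finally have "norm (b t - a) * norm (- b t - a) = r" using area2[OF nab] r by simp
  then show ?thesis using aF bF nab by blast
qed

lemma main_le:
  assumes meas: "measure lebesgue K = 1" and r: "0 < r" "r \<le> 1/2"
  shows "\<exists>a b. a \<in> frontier K \<and> b \<in> frontier K \<and> norm a = norm b \<and> norm (b - a) * norm (- b - a) = r"
proof (cases "r < 1/2")
  case True
  then show ?thesis using main_lt[OF meas r(1)] by blast
next
  case False
  then have r2: "r = 1/2" using r by simp
  define Q where "Q = (frontier K \<times> frontier K) \<inter> {p. norm (fst p) = norm (snd p)}"
  define phi where "phi p = norm (snd p - fst p) * norm (- snd p - fst p)" for p :: "(real^2) \<times> (real^2)"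
  have cQ: "compact Q" unfolding Q_def
    by (intro compact_Int_closed compact_Times compact_frontier cpt closed_Collect_eq)
       (intro continuous_intros)+
  have cl: "closed (phi ` Q)" unfolding phi_def[abs_def]
    by (intro compact_imp_closed compact_continuous_image cQ continuous_intros)
  have "\<forall>e>0. \<exists>y\<in>phi ` Q. dist y r < e"
  proof (intro allI impI)
    fix e :: real assume e: "e > 0"
    define r' where "r' = max (1/4) (1/2 - e/2)"
    have r': "0 < r'" "r' < 1/2" "dist r' r < e" using e r2 by (auto simp: r'_def dist_real_def max_def)
    obtain a b where ab: "a \<in> frontier K" "b \<in> frontier K" "norm a = norm b" "norm (b - a) * norm (- b - a) = r'"
      using main_lt[OF meas r'(1,2)] by blast
    then have "r' \<in> phi ` Q" unfolding Q_def phi_def by force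
    then show "\<exists>y\<in>phi ` Q. dist y r < e" using r'(3) by blast
  qed
  then have "r \<in> phi ` Q" using closed_approachable[OF cl] by blast
  then show ?thesis unfolding Q_def phi_def by force
qed

end



lemma zero_interior:
  fixes K :: "(real^2) set"
  assumes cvx: "convex K" and sym: "\<And>x. x \<in> K \<Longrightarrow> -x \<in> K" and ne: "interior K \<noteq> {}"
  shows "0 \<in> interior K"
proof -
  obtain z where "z \<in> interior K" using ne by blast
  then obtain d where d: "d > 0" "ball z d \<subseteq> K" using mem_interior by blast
  have "ball 0 d \<subseteq> K"
  proof
    fix y :: "real^2" assume y: "y \<in> ball 0 d"
    have "z + y \<in> K" using d y by (auto simp: dist_norm)
    moreover have "z - y \<in> K" using d y by (auto simp: dist_norm)
    then have "-(z - y) \<in> K" using sym by blast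
    ultimately have "(1/2) *\<^sub>R (z + y) + (1/2) *\<^sub>R (-(z - y)) \<in> K"
      using convexD[OF cvx, of "z + y" "-(z - y)" "1/2" "1/2"] by simp
    moreover have "(1/2) *\<^sub>R (z + y) + (1/2) *\<^sub>R (-(z - y)) = y" by (simp add: vec_eq_iff algebra_simps)
    ultimately show "y \<in> K" by simp
  qed
  then show ?thesis using d mem_interior by blast
qed

theorem lemma3p4:
  fixes K :: "(real^2) set" and r :: real
  assumes "convex_body K" and "centrally_symmetric K"
    and "measure lebesgue K = 1"
    and "0 < r" and "r \<le> 1/2"
  shows "has_inscribed_rectangle_of_area K r"
proof -
  obtain c where c: "\<And>x. x \<in> K \<Longrightarrow> 2 *\<^sub>R c - x \<in> K" using assms(2) unfolding centrally_symmetric_def by blast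
  have cb: "compact K" "convex K" "interior K \<noteq> {}" using assms(1) unfolding convex_body_def by auto
  define K' where "K' = (+) (- c) ` K"
  have cvx': "convex K'" unfolding K'_def by (rule convex_translation[OF cb(2)])
  have cpt': "compact K'" unfolding K'_def by (rule compact_translation[OF cb(1)])
  have sym': "-x \<in> K'" if xK: "x \<in> K'" for x
  proof -
    obtain k where k: "k \<in> K" "x = - c + k" using xK unfolding K'_def by blast
    have "-x = - c + (2 *\<^sub>R c - k)" using k by (simp add: algebra_simps scaleR_2)
    then show ?thesis using c[OF k(1)] unfolding K'_def by blast
  qed
  have "interior K' \<noteq> {}" using cb(3) unfolding K'_def interior_translation by blast
  then have int0: "0 \<in> interior K'" using zero_interior[OF cvx' sym'] by blast
  interpret cbody K' using cvx' cpt' int0 sym' by unfold_locales auto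
  have meas': "measure lebesgue K' = 1" unfolding K'_def using assms(3) measure_translation by metis
  obtain a b where ab: "a \<in> frontier K'" "b \<in> frontier K'" "norm a = norm b"
      "norm (b - a) * norm (- b - a) = r"
    using main_le[OF meas' assms(4,5)] by blast
  have fr: "c + y \<in> frontier K" if "y \<in> frontier K'" for y
    using that unfolding K'_def frontier_translation by auto
  have "(b - a) \<bullet> (- b - a) = (norm a)\<^sup>2 - (norm b)\<^sup>2"
    by (simp add: power2_norm_eq_inner algebra_simps inner_commute)
  then have orth: "(b - a) \<bullet> (- b - a) = 0" using ab(3) by simp
  show ?thesis unfolding has_inscribed_rectangle_of_area_def
  proof (intro exI conjI)
    show "is_rectangle (c + a) (c + b) (c + - a) (c + - b)"
      unfolding is_rectangle_def using orth by (simp add: algebra_simps)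
    show "rect_area (c + a) (c + b) (c + - b) = r"
    proof -
      have "c + b - (c + a) = b - a" "c + - b - (c + a) = - b - a" by (simp_all add: algebra_simps)
      then show ?thesis unfolding rect_area_def using ab(4) by simp
    qed
    show "c + a \<in> frontier K" using fr ab(1) by blast
    show "c + b \<in> frontier K" using fr ab(2) by blast
    show "c + - a \<in> frontier K" using fr front_sym ab(1) by blast
    show "c + - b \<in> frontier K" using fr front_sym ab(2) by blast
  qed
qed


end
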